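(* For every integer $n\ge0$ and all real $x,y$, $$\sum_{m=0}^{\lfloor n/2\rfloor}\binom{n}{2m}E_{n-2m}(x)(-1)^m y^{2m}=\sum_{k=0}^{n}\sum_{l=0}^{k}\sum_{m=0}^{\lfloor l/2\rfloor}S_2(n,k)\,\lambda^{n+l-k-2m}\binom{k}{l}E_{k-l,\lambda}(x)(-1)^m y^{2m}S_1(l,2m).$$
   Context: Let $\lambda$ be a nonzero real number; generating functions are formal power series in $t$. $e_\lambda^{x}(t)=(1+\lambda t)^{x/\lambda}$. The type 2 degenerate Euler polynomials are defined by $\frac{2}{e_\lambda^{1/2}(t)+e_\lambda^{-1/2}(t)}e_\lambda^{x}(t)=\sum_{n\ge0}E_{n,\lambda}(x)\frac{t^n}{n!}$. The (non-degenerate) type 2 Euler polynomials are defined by $\frac{2}{e^{t/2}+e^{-t/2}}e^{xt}=\sum_{n\ge0}E_n(x)\frac{t^n}{n!}$. $S_1(n,k)$ are the signed Stirling numbers of the first kind, $\frac{1}{k!}(\log(1+t))^k=\sum_{n\ge k}S_1(n,k)\frac{t^n}{n!}$, and $S_2(n,k)$ are the Stirling numbers of the second kind, $\frac{1}{k!}(e^t-1)^k=\sum_{n\ge k}S_2(n,k)\frac{t^n}{n!}$. *)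

theory Defs
  imports "HOL-Computational_Algebra.Formal_Power_Series" "HOL-Combinatorics.Stirling"
begin

(* degenerate exponential e_lambda^x(t) = (1 + lambda t)^(x/lambda), as a formal power series in t *)
definition deg_exp :: "real \<Rightarrow> real \<Rightarrow> real fps" where
  "deg_exp lam x = fps_binomial (x / lam) oo (fps_const lam * fps_X)"

definition deg_euler2 :: "real \<Rightarrow> nat \<Rightarrow> real \<Rightarrow> real" where
  "deg_euler2 lam n x =
     fact n * fps_nth ((fps_const 2 * inverse (deg_exp lam (1/2) + deg_exp lam (-1/2))) * deg_exp lam x) n"

definition euler2 :: "nat \<Rightarrow> real \<Rightarrow> real" where
  "euler2 n x =
     fact n * fps_nth ((fps_const 2 * inverse (fps_exp (1/2) + fps_exp (-1/2))) * fps_exp x) n"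

definition S1 :: "nat \<Rightarrow> nat \<Rightarrow> real" where
  "S1 n k = (-1) ^ (n - k) * real (stirling n k)"

definition S2 :: "nat \<Rightarrow> nat \<Rightarrow> real" where
  "S2 n k = real (Stirling n k)"

end

theory Submission imports Defs begin
unbundle fps_syntax

lemma S2_rec: "S2 (Suc n) (Suc j) = real (Suc j) * S2 n (Suc j) + S2 n j"
  by (simp add: S2_def algebra_simps)

lemma S1_rec: "S1 (Suc n) (Suc j) = S1 n j - real n * S1 n (Suc j)"
proof (cases "j < n")
  case True
  then obtain d where n: "n = j + Suc d" by (metis add_Suc_right less_imp_Suc_add)
  have e1: "n - j = Suc d" and e2: "n - Suc j = d" using n by auto
  show ?thesis unfolding S1_def e1 e2 by (simp add: algebra_simps n)
next
  case False
  then show ?thesis by (cases "j = n") (auto simp: S1_def)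
qed

lemma S1_0: "S1 0 k = (if k = 0 then 1 else 0)" by (cases k) (auto simp: S1_def)
lemma S2_0: "S2 0 k = (if k = 0 then 1 else 0)" by (cases k) (auto simp: S2_def)
lemma S1_Suc0: "S1 (Suc n) 0 = 0" by (simp add: S1_def)
lemma S2_Suc0: "S2 (Suc n) 0 = 0" by (simp add: S2_def)
lemma S1_less: "n < k \<Longrightarrow> S1 n k = 0" by (simp add: S1_def)
lemma S2_less: "n < k \<Longrightarrow> S2 n k = 0" by (simp add: S2_def)

lemma deriv_coeff_aux:
  fixes P Q :: "real fps"
  assumes "fps_deriv P = fps_const c * (Q + fps_const l * P)"
  shows "real (Suc n) * P $ Suc n = c * (Q $ n + l * P $ n)"
proof -
  have "fps_deriv P $ n = (fps_const c * (Q + fps_const l * P)) $ n" using assms by simp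
  then show ?thesis by (simp add: algebra_simps)
qed

definition Dser :: "real \<Rightarrow> real fps" where
  "Dser lam = fps_const (1/lam) * (fps_exp lam - 1)"

lemma Dser0: "Dser lam $ 0 = 0" by (simp add: Dser_def)

lemma Dser_deriv: "lam \<noteq> 0 \<Longrightarrow> fps_deriv (Dser lam) = fps_exp lam"
  by (simp add: Dser_def fps_deriv_mult_const_left)

lemma Dser_exp: "lam \<noteq> 0 \<Longrightarrow> fps_exp lam = 1 + fps_const lam * Dser lam"
proof -
  assume "lam \<noteq> 0"
  then have "fps_const lam * fps_const (1/lam) = 1" by simp
  then have "fps_const lam * Dser lam = fps_exp lam - 1"
    unfolding Dser_def by (metis mult.assoc mult_1)
  then show ?thesis by simp
qed

lemma Dser_pow_step:
  assumes "lam \<noteq> 0"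
  shows "real (Suc n) * (Dser lam ^ Suc k) $ Suc n
     = real (Suc k) * ((Dser lam ^ k) $ n + lam * (Dser lam ^ Suc k) $ n)"
proof -
  have "fps_deriv (Dser lam ^ Suc k) = fps_const (real (Suc k)) * fps_exp lam * Dser lam ^ k"
    using assms by (subst fps_deriv_power) (simp add: Dser_deriv del: power_Suc)
  also have "\<dots> = fps_const (real (Suc k)) * (Dser lam ^ k + fps_const lam * Dser lam ^ Suc k)"
    using assms by (simp add: Dser_exp algebra_simps)
  finally show ?thesis by (rule deriv_coeff_aux)
qed

lemma Dser_pow_nth:
  assumes "lam \<noteq> 0"
  shows "(Dser lam ^ k) $ n = lam ^ (n - k) * fact k * S2 n k / fact n"
proof (induction n arbitrary: k)
  case 0
  then show ?case by (cases k) (simp_all add: Dser0 S2_0)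
next
  case (Suc n)
  show ?case
  proof (cases k)
    case 0
    then show ?thesis by (simp add: S2_Suc0)
  next
    case (Suc j)
    have st: "real (Suc n) * (Dser lam ^ Suc j) $ Suc n
      = real (Suc j) * ((Dser lam ^ j) $ n + lam * (Dser lam ^ Suc j) $ n)"
      by (rule Dser_pow_step[OF assms])
    have key: "lam * lam ^ (n - Suc j) * S2 n (Suc j) = lam ^ (n - j) * S2 n (Suc j)"
    proof (cases "j < n")
      case True
      then have "n - j = Suc (n - Suc j)" by simp
      then show ?thesis by simp
    next
      case False
      then show ?thesis by (simp add: S2_less)
    qed
    have "(Dser lam ^ Suc j) $ Suc n = real (Suc j) * ((Dser lam ^ j) $ n + lam * (Dser lam ^ Suc j) $ n) / real (Suc n)"
      using st by (simp add: field_simps)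
    also have "\<dots> = real (Suc j) * (lam ^ (n - j) * fact j * S2 n j / fact n
        + (lam * lam ^ (n - Suc j) * S2 n (Suc j)) * fact (Suc j) / fact n) / real (Suc n)"
      by (simp only: Suc.IH) (simp add: field_simps del: of_nat_Suc)
    also have "\<dots> = lam ^ (Suc n - Suc j) * fact (Suc j) * S2 (Suc n) (Suc j) / fact (Suc n)"
      unfolding key S2_rec by (simp add: field_simps)
    finally show ?thesis using Suc by simp
  qed
qed

definition Hser :: "real \<Rightarrow> real fps" where
  "Hser lam = Abs_fps (\<lambda>n. if n = 0 then 0 else (-1) ^ (n+1) * lam ^ (n-1) / real n)"

lemma Hser0: "Hser lam $ 0 = 0" by (simp add: Hser_def)

lemma Hser_deriv_nth: "fps_deriv (Hser lam) $ n = (- lam) ^ n"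
  by (simp add: Hser_def field_simps power_minus[of lam] del: of_nat_Suc)

lemma Hser_deriv_eq: "fps_deriv (Hser lam) + fps_const lam * (fps_X * fps_deriv (Hser lam)) = 1"
proof (rule fps_ext)
  fix n
  show "(fps_deriv (Hser lam) + fps_const lam * (fps_X * fps_deriv (Hser lam))) $ n = (1::real fps) $ n"
    by (cases n) (simp_all add: Hser_deriv_nth del: fps_deriv_nth)
qed

lemma deriv_coeff_aux2:
  fixes P Q :: "real fps"
  assumes "fps_deriv P + fps_const l * (fps_X * fps_deriv P) = fps_const c * Q"
  shows "real (Suc n) * P $ Suc n + l * real n * P $ n = c * Q $ n"
proof -
  have "(fps_deriv P + fps_const l * (fps_X * fps_deriv P)) $ n = (fps_const c * Q) $ n" using assms by simp
  then show ?thesis by (cases n) (simp_all add: algebra_simps)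
qed

lemma Hser_pow_step:
  "real (Suc n) * (Hser lam ^ Suc k) $ Suc n + lam * real n * (Hser lam ^ Suc k) $ n
     = real (Suc k) * (Hser lam ^ k) $ n"
proof (rule deriv_coeff_aux2)
  have d: "fps_deriv (Hser lam ^ Suc k) = fps_const (real (Suc k)) * fps_deriv (Hser lam) * Hser lam ^ k"
    by (subst fps_deriv_power) (simp del: power_Suc)
  have "fps_deriv (Hser lam ^ Suc k) + fps_const lam * (fps_X * fps_deriv (Hser lam ^ Suc k))
     = (fps_deriv (Hser lam) + fps_const lam * (fps_X * fps_deriv (Hser lam))) * (fps_const (real (Suc k)) * Hser lam ^ k)"
    unfolding d by (simp add: algebra_simps)
  then show "fps_deriv (Hser lam ^ Suc k) + fps_const lam * (fps_X * fps_deriv (Hser lam ^ Suc k))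
     = fps_const (real (Suc k)) * Hser lam ^ k"
    by (simp add: Hser_deriv_eq)
qed

lemma Hser_pow_nth:
  "(Hser lam ^ k) $ n = lam ^ (n - k) * fact k * S1 n k / fact n"
proof (induction n arbitrary: k)
  case 0
  then show ?case by (cases k) (simp_all add: Hser0 S1_0)
next
  case (Suc n)
  show ?case
  proof (cases k)
    case 0
    then show ?thesis by (simp add: S1_Suc0)
  next
    case (Suc j)
    have st: "real (Suc n) * (Hser lam ^ Suc j) $ Suc n + lam * real n * (Hser lam ^ Suc j) $ n
      = real (Suc j) * (Hser lam ^ j) $ n"
      by (rule Hser_pow_step)
    have key: "lam * lam ^ (n - Suc j) * S1 n (Suc j) = lam ^ (n - j) * S1 n (Suc j)"
    proof (cases "j < n")
      case True
      then have "n - j = Suc (n - Suc j)" by simp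
      then show ?thesis by simp
    next
      case False
      then show ?thesis by (simp add: S1_less)
    qed
    have "(Hser lam ^ Suc j) $ Suc n = (real (Suc j) * (Hser lam ^ j) $ n - lam * real n * (Hser lam ^ Suc j) $ n) / real (Suc n)"
      using st by (simp add: field_simps)
    also have "\<dots> = (real (Suc j) * (lam ^ (n - j) * fact j * S1 n j / fact n)
        - real n * (lam * lam ^ (n - Suc j) * S1 n (Suc j)) * fact (Suc j) / fact n) / real (Suc n)"
      by (simp only: Suc.IH) (simp add: field_simps del: of_nat_Suc)
    also have "\<dots> = lam ^ (Suc n - Suc j) * fact (Suc j) * S1 (Suc n) (Suc j) / fact (Suc n)"
      unfolding key S1_rec fact_Suc by (simp add: field_simps del: of_nat_Suc)
    finally show ?thesis using Suc by simp
  qed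
qed

lemma Dser_exp0: "fps_exp lam $ 0 = (1::real)" by simp

lemma HD_inverse:
  assumes lam: "lam \<noteq> 0"
  shows "Hser lam oo Dser lam = fps_X"
proof -
  have D0: "Dser lam $ 0 = 0" by (rule Dser0)
  have e1: "fps_deriv (Hser lam) * (1 + fps_const lam * fps_X) = 1"
    using Hser_deriv_eq[of lam] by (simp add: algebra_simps)
  have "(fps_deriv (Hser lam) * (1 + fps_const lam * fps_X)) oo Dser lam = 1"
    by (simp add: e1)
  then have "(fps_deriv (Hser lam) oo Dser lam) * (1 + fps_const lam * Dser lam) = 1"
    by (simp add: fps_compose_mult_distrib[OF D0] fps_compose_add_distrib D0)
  then have e2: "(fps_deriv (Hser lam) oo Dser lam) * fps_exp lam = 1"
    using Dser_exp[OF lam] by simp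
  have "fps_deriv (Hser lam oo Dser lam) = fps_deriv fps_X"
    using e2 by (simp add: fps_compose_deriv[OF D0] Dser_deriv[OF lam])
  then show ?thesis
    by (subst (asm) fps_deriv_eq_iff) (simp add: Hser0)
qed

lemma LD: "lam \<noteq> 0 \<Longrightarrow> (fps_const lam * fps_X) oo Dser lam = fps_exp lam - 1"
  using Dser_exp[of lam] by (simp add: fps_compose_mult_distrib[OF Dser0] Dser0)

lemma deg_exp_D:
  assumes lam: "lam \<noteq> 0"
  shows "deg_exp lam x oo Dser lam = fps_exp x"
proof -
  define a where "a = x / lam"
  define G where "G = fps_binomial a oo (fps_exp lam - 1)"
  have E0: "(fps_exp lam - 1) $ 0 = (0::real)" by simp
  have L0: "(fps_const lam * fps_X) $ 0 = (0::real)" by simp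
  have "deg_exp lam x oo Dser lam = fps_binomial a oo ((fps_const lam * fps_X) oo Dser lam)"
    unfolding deg_exp_def a_def by (rule fps_compose_assoc[OF Dser0 L0, symmetric])
  also have "\<dots> = G" unfolding G_def LD[OF lam] ..
  finally have eq: "deg_exp lam x oo Dser lam = G" .
  have inv: "inverse (1 + fps_X) oo (fps_exp lam - 1) = inverse (fps_exp lam :: real fps)"
    by (simp add: fps_inverse_compose[OF E0] fps_compose_add_distrib E0)
  have EI: "inverse (fps_exp lam) * fps_exp lam = (1::real fps)"
    by (rule inverse_mult_eq_1) simp
  have "fps_deriv G = ((fps_const a * fps_binomial a * inverse (1 + fps_X)) oo (fps_exp lam - 1)) * (fps_const lam * fps_exp lam)"
    unfolding G_def by (simp add: fps_compose_deriv[OF E0] fps_binomial_deriv fps_divide_unit)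
  also have "\<dots> = fps_const a * G * (inverse (fps_exp lam) * fps_exp lam) * fps_const lam"
    unfolding fps_compose_mult_distrib[OF E0] inv G_def by (simp add: algebra_simps)
  also have "\<dots> = fps_const x * G"
    unfolding EI using lam by (simp add: a_def algebra_simps)
  finally have "G = fps_const (G $ 0) * fps_exp x" by (subst (asm) fps_exp_unique_ODE)
  moreover have "G $ 0 = 1" by (simp add: G_def)
  ultimately show ?thesis using eq by simp
qed

definition Aser :: "real \<Rightarrow> real \<Rightarrow> real fps" where
  "Aser lam x = fps_const 2 * inverse (deg_exp lam (1/2) + deg_exp lam (-1/2)) * deg_exp lam x"
definition Eser :: "real \<Rightarrow> real fps" where
  "Eser x = fps_const 2 * inverse (fps_exp (1/2) + fps_exp (-1/2)) * fps_exp x"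
definition Bser :: "real \<Rightarrow> real \<Rightarrow> real fps" where
  "Bser lam y = fps_cos y oo Hser lam"

lemma deg_exp_0: "deg_exp lam x $ 0 = 1" by (simp add: deg_exp_def)

lemma A_D:
  assumes lam: "lam \<noteq> 0"
  shows "Aser lam x oo Dser lam = Eser x"
proof -
  have n0: "(deg_exp lam (1/2) + deg_exp lam (-1/2)) $ 0 \<noteq> 0" by (simp add: deg_exp_0)
  show ?thesis
    unfolding Aser_def Eser_def fps_compose_mult_distrib[OF Dser0]
      fps_inverse_compose[OF Dser0 n0] fps_compose_add_distrib deg_exp_D[OF lam]
    by simp
qed

lemma B_D:
  assumes lam: "lam \<noteq> 0"
  shows "Bser lam y oo Dser lam = fps_cos y"
  unfolding Bser_def fps_compose_assoc[OF Dser0 Hser0, symmetric] HD_inverse[OF lam] by simp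

lemma main_fps:
  assumes lam: "lam \<noteq> 0"
  shows "(Bser lam y * Aser lam x) oo Dser lam = fps_cos y * Eser x"
  unfolding fps_compose_mult_distrib[OF Dser0] A_D[OF lam] B_D[OF lam] ..

lemma Aser_nth: "Aser lam x $ j = deg_euler2 lam j x / fact j"
  by (simp add: Aser_def deg_euler2_def)
lemma Eser_nth: "Eser x $ j = euler2 j x / fact j"
  by (simp add: Eser_def euler2_def)

lemma sum_even:
  fixes f :: "nat \<Rightarrow> 'a::comm_monoid_add"
  assumes "\<And>i. odd i \<Longrightarrow> f i = 0"
  shows "(\<Sum>i=0..n. f i) = (\<Sum>m=0..n div 2. f (2*m))"
proof (induction n)
  case 0 then show ?case by simp
next
  case (Suc n)
  show ?case
  proof (cases "even (Suc n)")
    case True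
    then have d: "Suc n div 2 = Suc (n div 2)" and e: "2 * Suc (n div 2) = Suc n"
      by (auto elim!: evenE)
    show ?thesis unfolding d sum.atLeast0_atMost_Suc Suc.IH e ..
  next
    case False
    then have d: "Suc n div 2 = n div 2" by (auto elim!: oddE)
    show ?thesis using assms[OF False] by (simp add: Suc.IH d)
  qed
qed

lemma Bser_nth:
  "Bser lam y $ l = (\<Sum>m=0..l div 2. (-1)^m * y^(2*m) * lam^(l-2*m) * S1 l (2*m)) / fact l"
proof -
  have "Bser lam y $ l = (\<Sum>i=0..l. fps_cos y $ i * (Hser lam ^ i) $ l)"
    unfolding Bser_def fps_compose_nth ..
  also have "\<dots> = (\<Sum>m=0..l div 2. fps_cos y $ (2*m) * (Hser lam ^ (2*m)) $ l)"
    by (rule sum_even) (simp add: fps_cos_def)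
  also have "\<dots> = (\<Sum>m=0..l div 2. (-1)^m * y^(2*m) * lam^(l-2*m) * S1 l (2*m) / fact l)"
    by (rule sum.cong) (simp_all add: fps_cos_def Hser_pow_nth)
  finally show ?thesis by (simp add: sum_divide_distrib)
qed

lemma term_eq:
  assumes "k \<le> n" "l \<le> k" "2*m \<le> l"
  shows "S2 n k * lam ^ (n + l - k - 2*m) * real (k choose l) * deg_euler2 lam (k - l) x
              * (-1)^m * y^(2*m) * S1 l (2*m)
    = fact n * (((-1)^m * y^(2*m) * lam^(l-2*m) * S1 l (2*m)) / fact l
        * (deg_euler2 lam (k - l) x / fact (k - l))
        * (lam ^ (n - k) * fact k * S2 n k / fact n))"
proof -
  have p: "lam ^ (n + l - k - 2*m) = lam^(l-2*m) * lam ^ (n - k)"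
  proof -
    have "n + l - k - 2*m = (l - 2*m) + (n - k)" using assms by simp
    then show ?thesis by (simp only: power_add)
  qed
  have c: "real (k choose l) = fact k / (fact l * fact (k - l))"
    using assms by (simp add: binomial_fact)
  show ?thesis unfolding p c by (simp add: field_simps)
qed

lemma LHS_eq:
  "(\<Sum>m=0..n div 2. real (n choose (2*m)) * euler2 (n - 2*m) x * (-1)^m * y^(2*m))
    = fact n * (fps_cos y * Eser x) $ n"
proof -
  have "(fps_cos y * Eser x) $ n = (\<Sum>i=0..n. fps_cos y $ i * Eser x $ (n - i))"
    by (rule fps_mult_nth)
  also have "\<dots> = (\<Sum>m=0..n div 2. fps_cos y $ (2*m) * Eser x $ (n - 2*m))"
    by (rule sum_even) (simp add: fps_cos_def)
  finally have "fact n * (fps_cos y * Eser x) $ n = (\<Sum>m=0..n div 2. fact n * (fps_cos y $ (2*m) * Eser x $ (n - 2*m)))"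
    by (simp add: sum_distrib_left)
  also have "\<dots> = (\<Sum>m=0..n div 2. real (n choose (2*m)) * euler2 (n - 2*m) x * (-1)^m * y^(2*m))"
  proof (rule sum.cong[OF refl])
    fix m assume "m \<in> {0..n div 2}"
    then have "2*m \<le> n" by auto
    then have c: "real (n choose (2*m)) = fact n / (fact (2*m) * fact (n - 2*m))"
      by (simp add: binomial_fact)
    show "fact n * (fps_cos y $ (2*m) * Eser x $ (n - 2*m)) = real (n choose (2*m)) * euler2 (n - 2*m) x * (-1)^m * y^(2*m)"
      unfolding c by (simp add: fps_cos_def Eser_nth field_simps)
  qed
  finally show ?thesis ..
qed

lemma RHS_eq:
  assumes lam: "lam \<noteq> 0"
  shows "(\<Sum>k=0..n. \<Sum>l=0..k. \<Sum>m=0..l div 2.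
            S2 n k * lam ^ (n + l - k - 2*m) * real (k choose l) * deg_euler2 lam (k - l) x
              * (-1)^m * y^(2*m) * S1 l (2*m))
    = fact n * ((Bser lam y * Aser lam x) oo Dser lam) $ n"
proof -
  have "fact n * ((Bser lam y * Aser lam x) oo Dser lam) $ n
     = (\<Sum>k=0..n. fact n * ((Bser lam y * Aser lam x) $ k * (Dser lam ^ k) $ n))"
    by (simp add: fps_compose_nth sum_distrib_left)
  also have "\<dots> = (\<Sum>k=0..n. \<Sum>l=0..k. \<Sum>m=0..l div 2.
            S2 n k * lam ^ (n + l - k - 2*m) * real (k choose l) * deg_euler2 lam (k - l) x
              * (-1)^m * y^(2*m) * S1 l (2*m))"
  proof (rule sum.cong[OF refl])
    fix k assume k: "k \<in> {0..n}"
    define d where "d = lam ^ (n - k) * fact k * S2 n k / fact n"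
    have "fact n * ((Bser lam y * Aser lam x) $ k * (Dser lam ^ k) $ n)
       = (\<Sum>l=0..k. fact n * (Bser lam y $ l * Aser lam x $ (k - l) * d))"
      unfolding Dser_pow_nth[OF lam] d_def[symmetric] by (simp add: fps_mult_nth sum_distrib_left sum_distrib_right)
    also have "\<dots> = (\<Sum>l=0..k. \<Sum>m=0..l div 2.
            S2 n k * lam ^ (n + l - k - 2*m) * real (k choose l) * deg_euler2 lam (k - l) x
              * (-1)^m * y^(2*m) * S1 l (2*m))"
    proof (rule sum.cong[OF refl])
      fix l assume l: "l \<in> {0..k}"
      have "fact n * (Bser lam y $ l * Aser lam x $ (k - l) * d)
        = (\<Sum>m=0..l div 2. fact n * (((-1)^m * y^(2*m) * lam^(l-2*m) * S1 l (2*m)) / fact l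
            * (deg_euler2 lam (k - l) x / fact (k - l)) * d))"
        unfolding Bser_nth Aser_nth sum_divide_distrib sum_distrib_left sum_distrib_right ..
      also have "\<dots> = (\<Sum>m=0..l div 2.
            S2 n k * lam ^ (n + l - k - 2*m) * real (k choose l) * deg_euler2 lam (k - l) x
              * (-1)^m * y^(2*m) * S1 l (2*m))"
      proof (rule sum.cong[OF refl])
        fix m assume "m \<in> {0..l div 2}"
        then have "2*m \<le> l" by auto
        then show "fact n * (((-1)^m * y^(2*m) * lam^(l-2*m) * S1 l (2*m)) / fact l
            * (deg_euler2 lam (k - l) x / fact (k - l)) * d) =
            S2 n k * lam ^ (n + l - k - 2*m) * real (k choose l) * deg_euler2 lam (k - l) x
              * (-1)^m * y^(2*m) * S1 l (2*m)"
          unfolding d_def using k l by (subst term_eq) auto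
      qed
      finally show "fact n * (Bser lam y $ l * Aser lam x $ (k - l) * d) = (\<Sum>m=0..l div 2.
            S2 n k * lam ^ (n + l - k - 2*m) * real (k choose l) * deg_euler2 lam (k - l) x
              * (-1)^m * y^(2*m) * S1 l (2*m))" .
    qed
    finally show "fact n * ((Bser lam y * Aser lam x) $ k * (Dser lam ^ k) $ n) = (\<Sum>l=0..k. \<Sum>m=0..l div 2.
            S2 n k * lam ^ (n + l - k - 2*m) * real (k choose l) * deg_euler2 lam (k - l) x
              * (-1)^m * y^(2*m) * S1 l (2*m))" .
  qed
  finally show ?thesis ..
qed

theorem mainTheorem13:
  fixes lam x y :: real and n :: nat
  assumes "lam \<noteq> 0"
  shows "(\<Sum>m=0..n div 2. real (n choose (2*m)) * euler2 (n - 2*m) x * (-1)^m * y^(2*m))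
       = (\<Sum>k=0..n. \<Sum>l=0..k. \<Sum>m=0..l div 2.
            S2 n k * lam ^ (n + l - k - 2*m) * real (k choose l) * deg_euler2 lam (k - l) x
              * (-1)^m * y^(2*m) * S1 l (2*m))"
  unfolding LHS_eq RHS_eq[OF assms] main_fps[OF assms] ..

end
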